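(* The map $\dagger:\Psi\mathfrak D\to\Psi\mathfrak D$, $\bigl(\sum_{m\le M}\sum_{k\le K}C_{km}x^k(d/dx)^m\bigr)^\dagger=\sum_{m\le M}\sum_{k\le K}C_{km}(-d/dx)^m x^k$, is a well-defined involutive antiautomorphism of $\Psi\mathfrak D$.
   Context: $\Psi\mathfrak D$ is the algebra of all formal series $\sum_{m=-\infty}^{M}\sum_{k=-\infty}^{K}C_{km}x^k(d/dx)^m$ with $C_{km}\in\mathbb C$ and integers $M,K$ depending on the series, with multiplication determined by $(d/dx)^m x^k=\sum_{j\ge0}\frac{(m)_j(k)_j}{j!}x^{k-j}(d/dx)^{m-j}$ for $m,k\in\mathbb Z$, $(a)_j=a(a-1)\cdots(a-j+1)$; the series $\sum C_{km}(-d/dx)^mx^k$ is interpreted in $\Psi\mathfrak D$ via this rule. *)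

theory Defs
  imports Complex_Main
begin

text \<open>An element of the algebra of formal pseudo-differential series is represented by its
  coefficient function C, where C k m is the coefficient of x^k (d/dx)^m (k, m integers).\<close>

type_synonym psd = "int \<Rightarrow> int \<Rightarrow> complex"

definition psd_carrier :: "psd set" where
  "psd_carrier = {C. \<exists>K M. \<forall>k m. C k m \<noteq> 0 \<longrightarrow> k \<le> K \<and> m \<le> M}"

definition ffal :: "int \<Rightarrow> nat \<Rightarrow> complex" where
  "ffal a j = (\<Prod>i<j. of_int a - of_nat i)"

text \<open>Structure constants of the rule
  (d/dx)^m x^k = sum over j of (m)_j (k)_j / j! x^(k-j) (d/dx)^(m-j).\<close>
definition psd_rule_coeff :: "int \<Rightarrow> int \<Rightarrow> nat \<Rightarrow> complex" where
  "psd_rule_coeff m k j = ffal m j * ffal k j / of_nat (fact j)"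

text \<open>Product: (x^a D^b)(x^c D^d) = x^a (D^b x^c) D^d
   = sum_j (b)_j (c)_j / j! x^(a+c-j) D^(b+d-j), extended bilinearly.
  For elements of the carrier, the index set below is finite.\<close>
definition psd_mult :: "psd \<Rightarrow> psd \<Rightarrow> psd" where
  "psd_mult A B = (\<lambda>k m.
     \<Sum>(a, b, c, d, j) \<in> {(a, b, c, d, j). A a b \<noteq> 0 \<and> B c d \<noteq> 0 \<and>
                              a + c - int j = k \<and> b + d - int j = m}.
        A a b * B c d * psd_rule_coeff b c j)"

definition psd_add :: "psd \<Rightarrow> psd \<Rightarrow> psd" where
  "psd_add A B = (\<lambda>k m. A k m + B k m)"

definition psd_smult :: "complex \<Rightarrow> psd \<Rightarrow> psd" where
  "psd_smult c A = (\<lambda>k m. c * A k m)"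

definition psd_one :: psd where
  "psd_one = (\<lambda>k m. if k = 0 \<and> m = 0 then 1 else 0)"

text \<open>The map dagger: sum C_km x^k (d/dx)^m  is sent to  sum C_km (-d/dx)^m x^k, where
  (-d/dx)^m x^k = (-1)^m (d/dx)^m x^k is expanded in the algebra via the rule above:
  C_km (-1)^m sum_j (m)_j (k)_j / j! x^(k-j) (d/dx)^(m-j).\<close>
definition psd_dagger :: "psd \<Rightarrow> psd" where
  "psd_dagger C = (\<lambda>k' m'.
     \<Sum>j \<in> {j::nat. C (k' + int j) (m' + int j) \<noteq> 0}.
        C (k' + int j) (m' + int j) * (-1) powi (m' + int j) *
        psd_rule_coeff (m' + int j) (k' + int j) j)"

end

theory Submission
  imports Defs "HOL-Computational_Algebra.Formal_Power_Series" "HOL-Library.Groups_Big_Fun"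
begin

definition P :: "complex \<Rightarrow> nat \<Rightarrow> complex" where
  "P x n = (\<Prod>i<n. x - of_nat i)"

definition cf :: "complex \<Rightarrow> complex \<Rightarrow> nat \<Rightarrow> complex" where
  "cf x y j = fact j * (x gchoose j) * (y gchoose j)"

lemma P_g: "P x n = fact n * (x gchoose n)"
  unfolding P_def gbinomial_mult_fact atLeast0LessThan ..

lemma P_add: "P x (i + j) = P x i * P (x - of_nat i) j"
proof (induction j)
  case 0 then show ?case by (simp add: P_def)
next
  case (Suc j)
  have "P x (i + Suc j) = P x (i + j) * (x - of_nat (i+j))"
    by (simp add: P_def lessThan_Suc)
  also have "\<dots> = P x i * (P (x - of_nat i) j * (x - of_nat i - of_nat j))"
    using Suc by (simp add: algebra_simps)
  also have "P (x - of_nat i) j * (x - of_nat i - of_nat j) = P (x - of_nat i) (Suc j)"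
    by (simp add: P_def lessThan_Suc)
  finally show ?case .
qed

lemma coeff_cf: "psd_rule_coeff m k j = cf (of_int m) (of_int k) j"
proof -
  have "ffal a j = P (of_int a) j" for a unfolding ffal_def P_def by simp
  then show ?thesis unfolding psd_rule_coeff_def cf_def by (simp add: P_g field_simps)
qed

lemma vdm: "(\<Sum>i\<le>n. (x gchoose i) * (y gchoose (n - i))) = ((x + y) gchoose n)"
  using gbinomial_Vandermonde[of x y n] by (simp add: atMost_atLeast0)

lemma mixed:
  fixes c e :: complex
  shows "(\<Sum>j\<le>q. (-1)^j * (c gchoose j) * ((e - of_nat j) gchoose (q - j))) = ((e - c) gchoose q)"
proof -
  have "(\<Sum>j\<le>q. (-1)^j * (c gchoose j) * ((e - of_nat j) gchoose (q - j)))
      = (\<Sum>j\<le>q. (-1)^q * ((c gchoose j) * ((of_nat q - e - 1) gchoose (q - j))))"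
  proof (rule sum.cong[OF refl])
    fix j assume "j \<in> {..q}"
    then have jq: "j \<le> q" by simp
    have "((e - of_nat j) gchoose (q - j)) = (-1)^(q-j) * ((of_nat (q-j) - (e - of_nat j) - 1) gchoose (q-j))"
      by (rule gbinomial_negated_upper)
    also have "of_nat (q-j) - (e - of_nat j) - 1 = (of_nat q - e - 1 :: complex)"
      using jq by (simp add: of_nat_diff)
    finally have h: "((e - of_nat j) gchoose (q - j)) = (-1)^(q-j) * ((of_nat q - e - 1) gchoose (q-j))" .
    have "(-1::complex)^j * (-1)^(q-j) = (-1)^q"
      using jq by (metis le_add_diff_inverse power_add)
    then show "(-1)^j * (c gchoose j) * ((e - of_nat j) gchoose (q - j)) = (-1)^q * ((c gchoose j) * ((of_nat q - e - 1) gchoose (q - j)))"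
      unfolding h by (metis (no_types, lifting) mult.assoc mult.left_commute)
  qed
  also have "\<dots> = (-1)^q * ((c + (of_nat q - e - 1)) gchoose q)"
    by (simp add: sum_distrib_left[symmetric] vdm)
  also have "\<dots> = ((e - c) gchoose q)"
    using gbinomial_negated_upper[of "e - c" q] by (simp add: algebra_simps)
  finally show ?thesis .
qed

lemma swap_tri: fixes N :: nat shows "(\<Sum>q\<le>N. \<Sum>j\<le>q. f q j) = (\<Sum>j\<le>N. \<Sum>u\<le>N-j. f (j+u) j)"
proof -
  have "(\<Sum>j\<le>N. \<Sum>u\<le>N-j. f (j+u) j) = (\<Sum>(i,u)\<in>Sigma {..N} (\<lambda>i. {..N-i}). f (i+u) i)"
    by (rule sum.Sigma[of "{..N}" "\<lambda>i. {..N-i}"]) auto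
  also have "Sigma {..N} (\<lambda>i. {..N-i}) = {(i,u). i+u \<le> N}" by auto
  also have "(\<Sum>(i,u)\<in>{(i,u). i+u \<le> N}. f (i+u) i) = (\<Sum>k\<le>N. \<Sum>i\<le>k. f (i + (k-i)) i)"
    by (rule sum.triangle_reindex_eq)
  also have "\<dots> = (\<Sum>q\<le>N. \<Sum>j\<le>q. f q j)"
    by (intro sum.cong refl) auto
  finally show ?thesis by simp
qed

lemma collapse:
  fixes d c a :: complex
  shows "(\<Sum>p\<le>M. cf d c p * cf (d - of_nat p) a (M - p)) = cf d (c + a) M"
proof -
  have "(\<Sum>p\<le>M. cf d c p * cf (d - of_nat p) a (M - p))
     = (\<Sum>p\<le>M. (fact M * (d gchoose M)) * ((c gchoose p) * (a gchoose (M - p))))"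
  proof (rule sum.cong[OF refl])
    fix p assume "p \<in> {..M}"
    then have pM: "p \<le> M" by simp
    have "P d M = P d p * P (d - of_nat p) (M - p)"
      using P_add[of d p "M - p"] pM by simp
    then have "fact M * (d gchoose M) = (fact p * (d gchoose p)) * (fact (M-p) * ((d - of_nat p) gchoose (M-p)))"
      by (simp add: P_g)
    then show "cf d c p * cf (d - of_nat p) a (M - p) = (fact M * (d gchoose M)) * ((c gchoose p) * (a gchoose (M - p)))"
      unfolding cf_def by (simp add: algebra_simps)
  qed
  also have "\<dots> = fact M * (d gchoose M) * ((c + a) gchoose M)"
    by (simp add: sum_distrib_left[symmetric] vdm)
  finally show ?thesis by (simp add: cf_def)
qed

lemma KI:
  fixes a b c d :: complex
  shows "(\<Sum>j\<le>N. (-1)^j * cf b c j * cf (b + d - of_nat j) (a + c - of_nat j) (N - j))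
       = (\<Sum>q\<le>N. cf b a q * cf d (a + c - of_nat q) (N - q))"
proof -
  define e where "e = a + c"
  have a_eq: "a = e - c" by (simp add: e_def)
  define T where "T j u = (-1)^j * (fact j * (b gchoose j) * (c gchoose j) * (fact (N-j) * ((e - of_nat j) gchoose (N-j))))
        * (((b - of_nat j) gchoose u) * (d gchoose (N - j - u)))" for j u
  have step1: "cf b a q * cf d (e - of_nat q) (N - q) = (\<Sum>j\<le>q. T j (q - j))" if qN: "q \<le> N" for q
  proof -
    have "cf b a q * cf d (e - of_nat q) (N - q)
       = fact q * (b gchoose q) * fact (N-q) * (d gchoose (N-q)) * (((e - c) gchoose q) * ((e - of_nat q) gchoose (N-q)))"
      unfolding cf_def a_eq by (simp add: algebra_simps)
    also have "((e - c) gchoose q) = (\<Sum>j\<le>q. (-1)^j * (c gchoose j) * ((e - of_nat j) gchoose (q - j)))"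
      by (simp add: mixed)
    finally have "cf b a q * cf d (e - of_nat q) (N - q) = (\<Sum>j\<le>q. fact q * (b gchoose q) * fact (N-q) * (d gchoose (N-q)) *
        ((-1)^j * (c gchoose j) * ((e - of_nat j) gchoose (q - j)) * ((e - of_nat q) gchoose (N-q))))"
      by (simp add: sum_distrib_left sum_distrib_right)
    also have "\<dots> = (\<Sum>j\<le>q. T j (q - j))"
    proof (rule sum.cong[OF refl])
      fix j assume "j \<in> {..q}"
      then have jq: "j \<le> q" by simp
      have h1: "P (e - of_nat j) (N - j) = P (e - of_nat j) (q - j) * P (e - of_nat q) (N - q)"
        using P_add[of "e - of_nat j" "q - j" "N - q"] jq qN by (simp add: of_nat_diff)
      have h2: "P b q = P b j * P (b - of_nat j) (q - j)"
        using P_add[of b j "q - j"] jq by simp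
      have nz: "fact (q - j) \<noteq> (0::complex)" by simp
      from h1 h2 nz show "fact q * (b gchoose q) * fact (N-q) * (d gchoose (N-q)) *
        ((-1)^j * (c gchoose j) * ((e - of_nat j) gchoose (q - j)) * ((e - of_nat q) gchoose (N-q))) = T j (q - j)"
        unfolding T_def P_g using jq qN by (simp add: algebra_simps)
    qed
    finally show ?thesis .
  qed
  have "(\<Sum>q\<le>N. cf b a q * cf d (a + c - of_nat q) (N - q)) = (\<Sum>q\<le>N. \<Sum>j\<le>q. T j (q - j))"
    using step1 e_def by (intro sum.cong refl) auto
  also have "\<dots> = (\<Sum>j\<le>N. \<Sum>u\<le>N-j. T j u)"
    by (subst swap_tri) simp
  also have "\<dots> = (\<Sum>j\<le>N. (-1)^j * cf b c j * cf (b + d - of_nat j) (a + c - of_nat j) (N - j))"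
  proof (rule sum.cong[OF refl])
    fix j assume "j \<in> {..N}"
    have "(\<Sum>u\<le>N-j. T j u) = (-1)^j * (fact j * (b gchoose j) * (c gchoose j) * (fact (N-j) * ((e - of_nat j) gchoose (N-j))))
        * (\<Sum>u\<le>N-j. ((b - of_nat j) gchoose u) * (d gchoose (N - j - u)))"
      unfolding T_def by (simp add: sum_distrib_left)
    also have "(\<Sum>u\<le>N-j. ((b - of_nat j) gchoose u) * (d gchoose (N - j - u))) = ((b + d - of_nat j) gchoose (N - j))"
      using vdm[where n="N-j" and x="b - of_nat j" and y=d] by (simp add: algebra_simps)
    finally show "(\<Sum>u\<le>N-j. T j u) = (-1)^j * cf b c j * cf (b + d - of_nat j) (a + c - of_nat j) (N - j)"
      unfolding cf_def e_def by (simp add: algebra_simps)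
  qed
  finally show ?thesis by simp
qed


definition s :: "int \<Rightarrow> complex" where "s z = (-1) powi z"

lemma s_add: "s (a + b) = s a * s b"
  unfolding s_def by (simp add: power_int_add)

lemma s_nat: "s (int j) = (-1)^j"
  unfolding s_def by simp

lemma s_diff: "s (z - int j) = s z * (-1)^j"
proof -
  have "s (z - int j) = s z * s (- int j)" using s_add[of z "- int j"] by simp
  also have "s (- int j) = (-1)^j" unfolding s_def
    by (simp add: power_int_minus) (metis inverse_minus_eq inverse_1 power_inverse)
  finally show ?thesis .
qed

lemma s_sq: "s z * s z = 1"
  using s_add[of z "-z"] unfolding s_def by (simp add: power_int_minus flip: power_int_add)

lemma SA_sup:
  fixes g :: "'a \<Rightarrow> complex"
  assumes "finite S" "\<And>x. x \<notin> S \<Longrightarrow> g x = 0"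
  shows "Sum_any g = sum g S"
  using assms by (intro Sum_any.expand_superset) auto

lemma SA_prod:
  fixes g :: "'a \<Rightarrow> 'b \<Rightarrow> complex"
  assumes "finite {p. g (fst p) (snd p) \<noteq> 0}"
  shows "Sum_any (\<lambda>x. Sum_any (g x)) = Sum_any (\<lambda>(x,y). g x y)"
proof (rule Sum_any.cartesian_product)
  let ?S = "{p. g (fst p) (snd p) \<noteq> 0}"
  show "finite (fst ` ?S \<times> snd ` ?S)" using assms by simp
  show "{a. \<exists>b. g a b \<noteq> 0} \<times> {b. \<exists>a. g a b \<noteq> 0} \<subseteq> fst ` ?S \<times> snd ` ?S"
    by (auto simp: image_iff)
qed

lemma SA_fin_inner:
  fixes g :: "'a \<Rightarrow> 'b \<Rightarrow> complex"
  assumes "finite {p. g (fst p) (snd p) \<noteq> 0}"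
  shows "finite {y. g x y \<noteq> 0}"
proof -
  have "{y. g x y \<noteq> 0} \<subseteq> snd ` {p. g (fst p) (snd p) \<noteq> 0}"
    by (auto simp: image_iff)
  then show ?thesis using assms finite_subset by blast
qed

lemma carrier_U:
  assumes "A \<in> psd_carrier"
  obtains U where "\<And>k m. A k m \<noteq> 0 \<Longrightarrow> k \<le> U \<and> m \<le> U"
proof -
  obtain K M where "\<forall>k m. A k m \<noteq> 0 \<longrightarrow> k \<le> K \<and> m \<le> M"
    using assms unfolding psd_carrier_def by blast
  then show ?thesis by (intro that[of "max K M"]) (meson le_max_iff_disj)
qed

lemma carrier_I:
  assumes "\<And>k m. A k m \<noteq> 0 \<Longrightarrow> k \<le> U \<and> m \<le> U"
  shows "A \<in> psd_carrier"
  using assms unfolding psd_carrier_def by blast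

lemma fin1:
  assumes "A \<in> psd_carrier"
  shows "finite {j::nat. A (k + int j) (m + int j) \<noteq> 0}"
proof -
  obtain U where U: "\<And>k m. A k m \<noteq> 0 \<Longrightarrow> k \<le> U \<and> m \<le> U" using carrier_U assms by blast
  have "{j::nat. A (k + int j) (m + int j) \<noteq> 0} \<subseteq> {..nat (U - k)}"
  proof
    fix j assume "j \<in> {j::nat. A (k + int j) (m + int j) \<noteq> 0}"
    then have "k + int j \<le> U" using U by blast
    then show "j \<in> {..nat (U - k)}" by simp
  qed
  then show ?thesis using finite_subset by blast
qed

lemma dag_SA:
  assumes "A \<in> psd_carrier"
  shows "psd_dagger A k m = Sum_any (\<lambda>j. A (k + int j) (m + int j) * s (m + int j) * psd_rule_coeff (m + int j) (k + int j) j)"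
  unfolding psd_dagger_def s_def
  by (rule sym, rule Sum_any.expand_superset[OF fin1[OF assms]]) (auto simp del: of_nat_add)

lemma dag_bound:
  assumes "A \<in> psd_carrier" "\<And>k m. A k m \<noteq> 0 \<Longrightarrow> k \<le> U \<and> m \<le> U"
  shows "psd_dagger A k m \<noteq> 0 \<Longrightarrow> k \<le> U \<and> m \<le> U"
proof -
  assume "psd_dagger A k m \<noteq> 0"
  moreover have "psd_dagger A k m = 0" if "{j::nat. A (k + int j) (m + int j) \<noteq> 0} = {}"
    unfolding psd_dagger_def using that by simp
  ultimately have "{j::nat. A (k + int j) (m + int j) \<noteq> 0} \<noteq> {}" by blast
  then obtain j where "A (k + int j) (m + int j) \<noteq> 0" by blast
  then have "k + int j \<le> U \<and> m + int j \<le> U" using assms(2) by blast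
  then show ?thesis by simp
qed

lemma dag_carrier:
  assumes "A \<in> psd_carrier" shows "psd_dagger A \<in> psd_carrier"
proof -
  obtain U where U: "\<And>k m. A k m \<noteq> 0 \<Longrightarrow> k \<le> U \<and> m \<le> U" using carrier_U assms by blast
  show ?thesis by (rule carrier_I[where U=U]) (rule dag_bound[OF assms U])
qed

definition Mset where
  "Mset A B k m = {(a, b, c, d, j). A a b \<noteq> 0 \<and> B c d \<noteq> 0 \<and>
                              a + c - int j = k \<and> b + d - int j = m}"

lemma Mset_fin:
  assumes "\<And>k m. A k m \<noteq> 0 \<Longrightarrow> k \<le> U \<and> m \<le> U" "\<And>k m. B k m \<noteq> 0 \<Longrightarrow> k \<le> U \<and> m \<le> U"
  shows "finite (Mset A B k m)"
proof -
  have "Mset A B k m \<subseteq> {k-U..U} \<times> {m-U..U} \<times> {k-U..U} \<times> {m-U..U} \<times> {..nat(2*U-k)}"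
  proof
    fix x assume "x \<in> Mset A B k m"
    then obtain a b c d j where x: "x = (a,b,c,d,j)" and h: "A a b \<noteq> 0" "B c d \<noteq> 0"
       "a + c - int j = k" "b + d - int j = m" unfolding Mset_def by blast
    have "a \<le> U" "b \<le> U" using assms(1)[OF h(1)] by auto
    moreover have "c \<le> U" "d \<le> U" using assms(2)[OF h(2)] by auto
    ultimately show "x \<in> {k-U..U} \<times> {m-U..U} \<times> {k-U..U} \<times> {m-U..U} \<times> {..nat(2*U-k)}"
      unfolding x using h(3,4) by simp
  qed
  then show ?thesis by (rule finite_subset) auto
qed

lemma mult_Mset: "psd_mult A B k m = sum (\<lambda>(a,b,c,d,j). A a b * B c d * psd_rule_coeff b c j) (Mset A B k m)"
  unfolding psd_mult_def Mset_def by simp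

lemma mult_SA:
  assumes "\<And>k m. A k m \<noteq> 0 \<Longrightarrow> k \<le> U \<and> m \<le> U" "\<And>k m. B k m \<noteq> 0 \<Longrightarrow> k \<le> U \<and> m \<le> U"
  shows "psd_mult A B k m = Sum_any (\<lambda>(a,b,c,d,j). if a+c-int j = k \<and> b+d-int j = m then A a b * B c d * psd_rule_coeff b c j else 0)"
proof -
  have "Sum_any (\<lambda>(a,b,c,d,j). if a+c-int j = k \<and> b+d-int j = m then A a b * B c d * psd_rule_coeff b c j else 0)
     = sum (\<lambda>(a,b,c,d,j). if a+c-int j = k \<and> b+d-int j = m then A a b * B c d * psd_rule_coeff b c j else 0) (Mset A B k m)"
    by (rule SA_sup[OF Mset_fin[OF assms]]) (auto simp: Mset_def split: if_splits)
  also have "\<dots> = psd_mult A B k m"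
    unfolding psd_mult_def Mset_def by (intro sum.cong) auto
  finally show ?thesis by simp
qed

lemma mult_bound:
  assumes "\<And>k m. A k m \<noteq> 0 \<Longrightarrow> k \<le> U \<and> m \<le> U" "\<And>k m. B k m \<noteq> 0 \<Longrightarrow> k \<le> U \<and> m \<le> U"
  shows "psd_mult A B k m \<noteq> 0 \<Longrightarrow> k \<le> 2*U \<and> m \<le> 2*U"
proof -
  assume "psd_mult A B k m \<noteq> 0"
  moreover have "psd_mult A B k m = 0" if "Mset A B k m = {}"
    using that by (simp add: mult_Mset)
  ultimately have "Mset A B k m \<noteq> {}" by blast
  then obtain a b c d j where "A a b \<noteq> 0" "B c d \<noteq> 0" "a + c - int j = k" "b + d - int j = m"
    unfolding Mset_def by blast
  moreover have "a \<le> U" "b \<le> U" using assms(1) \<open>A a b \<noteq> 0\<close> by auto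
  moreover have "c \<le> U" "d \<le> U" using assms(2) \<open>B c d \<noteq> 0\<close> by auto
  ultimately show ?thesis by simp
qed


lemma SA_pair:
  fixes f :: "nat \<Rightarrow> nat \<Rightarrow> complex"
  shows "Sum_any (\<lambda>(j,n). if j + n = N then f j n else 0) = (\<Sum>j\<le>N. f j (N-j))"
proof -
  have "Sum_any (\<lambda>(j,n). if j + n = N then f j n else 0) = sum (\<lambda>(j,n). if j + n = N then f j n else 0) ({..N} \<times> {..N})"
    by (rule SA_sup) (auto split: if_splits)
  also have "\<dots> = (\<Sum>j\<le>N. \<Sum>n\<le>N. if j + n = N then f j n else 0)"
    by (rule sum.cartesian_product[symmetric])
  also have "\<dots> = (\<Sum>j\<le>N. f j (N-j))"
  proof (rule sum.cong[OF refl])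
    fix j assume "j \<in> {..N}"
    then have "(\<Sum>n\<le>N. if j + n = N then f j n else 0) = (\<Sum>n\<le>N. if n = N - j then f j n else 0)"
      by (intro sum.cong refl) auto
    also have "\<dots> = f j (N - j)" by (simp add: sum.delta)
    finally show "(\<Sum>n\<le>N. if j + n = N then f j n else 0) = f j (N - j)" .
  qed
  finally show ?thesis .
qed

lemma SA_triple:
  fixes f :: "nat \<Rightarrow> nat \<Rightarrow> nat \<Rightarrow> complex"
  shows "Sum_any (\<lambda>(p,q,r). if p + q + r = N then f p q r else 0) = (\<Sum>q\<le>N. \<Sum>p\<le>N-q. f p q (N-q-p))"
proof -
  have "Sum_any (\<lambda>(p,q,r). if p + q + r = N then f p q r else 0) = sum (\<lambda>(p,q,r). if p + q + r = N then f p q r else 0) ({..N} \<times> {..N} \<times> {..N})"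
    by (rule SA_sup) (auto split: if_splits)
  also have "\<dots> = (\<Sum>p\<le>N. \<Sum>(q,r)\<in>{..N} \<times> {..N}. if p + q + r = N then f p q r else 0)"
    by (rule sum.cartesian_product[symmetric])
  also have "\<dots> = (\<Sum>p\<le>N. \<Sum>q\<le>N. \<Sum>r\<le>N. if p + q + r = N then f p q r else 0)"
    by (simp add: sum.cartesian_product)
  also have "\<dots> = (\<Sum>p\<le>N. \<Sum>q\<le>N. if p + q \<le> N then f p q (N-q-p) else 0)"
  proof (intro sum.cong refl)
    fix p q assume "p \<in> {..N}" "q \<in> {..N}"
    have "(\<Sum>r\<le>N. if p + q + r = N then f p q r else 0) = (\<Sum>r\<le>N. if r = N - q - p then (if p + q \<le> N then f p q r else 0) else 0)"
      by (intro sum.cong refl) auto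
    also have "\<dots> = (if p + q \<le> N then f p q (N-q-p) else 0)" by (simp add: sum.delta)
    finally show "(\<Sum>r\<le>N. if p + q + r = N then f p q r else 0) = (if p + q \<le> N then f p q (N-q-p) else 0)" .
  qed
  also have "\<dots> = (\<Sum>q\<le>N. \<Sum>p\<le>N. if p + q \<le> N then f p q (N-q-p) else 0)"
    by (rule sum.swap)
  also have "\<dots> = (\<Sum>q\<le>N. \<Sum>p\<le>N-q. f p q (N-q-p))"
  proof (rule sum.cong[OF refl])
    fix q assume q: "q \<in> {..N}"
    have "(\<Sum>p\<le>N. if p + q \<le> N then f p q (N-q-p) else 0) = (\<Sum>p\<le>N. if p \<in> {..N-q} then f p q (N-q-p) else 0)"
      using q by (intro sum.cong refl) auto
    also have "\<dots> = sum (\<lambda>p. f p q (N-q-p)) ({..N} \<inter> {..N-q})"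
      by (rule sum.inter_restrict[symmetric]) simp
    also have "{..N} \<inter> {..N-q} = {..N-q}" by auto
    finally show "(\<Sum>p\<le>N. if p + q \<le> N then f p q (N-q-p) else 0) = (\<Sum>p\<le>N-q. f p q (N-q-p))" .
  qed
  finally show ?thesis .
qed

definition Kf :: "int \<Rightarrow> int \<Rightarrow> int \<Rightarrow> int \<Rightarrow> int \<Rightarrow> int \<Rightarrow> complex" where
  "Kf k m a b c d = (if a+c-k = b+d-m \<and> 0 \<le> a+c-k then s (b+d) *
     (\<Sum>q\<le>nat (a+c-k). cf (of_int b) (of_int a) q * cf (of_int d) (of_int a + of_int c - of_nat q) (nat (a+c-k) - q)) else 0)"

lemma KL:
  "Sum_any (\<lambda>(j::nat,n::nat). if a+c-int j-int n = k \<and> b+d-int j-int n = m then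
      psd_rule_coeff b c j * s (b+d-int j) * psd_rule_coeff (b+d-int j) (a+c-int j) n else 0) = Kf k m a b c d"
proof (cases "a+c-k = b+d-m \<and> 0 \<le> a+c-k")
  case True
  define N where "N = nat (a+c-k)"
  have N1: "a + c - k = int N" and N2: "b + d - m = int N" using True by (auto simp: N_def)
  have "(\<lambda>(j::nat,n::nat). if a+c-int j-int n = k \<and> b+d-int j-int n = m then
      psd_rule_coeff b c j * s (b+d-int j) * psd_rule_coeff (b+d-int j) (a+c-int j) n else 0)
    = (\<lambda>(j,n). if j + n = N then psd_rule_coeff b c j * s (b+d-int j) * psd_rule_coeff (b+d-int j) (a+c-int j) n else 0)"
    using N1 N2 by (auto simp: fun_eq_iff)
  then have "Sum_any (\<lambda>(j::nat,n::nat). if a+c-int j-int n = k \<and> b+d-int j-int n = m then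
      psd_rule_coeff b c j * s (b+d-int j) * psd_rule_coeff (b+d-int j) (a+c-int j) n else 0)
     = (\<Sum>j\<le>N. psd_rule_coeff b c j * s (b+d-int j) * psd_rule_coeff (b+d-int j) (a+c-int j) (N-j))"
    by (simp add: SA_pair)
  also have "\<dots> = s (b+d) * (\<Sum>j\<le>N. (-1)^j * cf (of_int b) (of_int c) j *
        cf (of_int b + of_int d - of_nat j) (of_int a + of_int c - of_nat j) (N - j))"
    by (simp add: sum_distrib_left coeff_cf s_diff algebra_simps)
  also have "\<dots> = Kf k m a b c d"
    unfolding KI Kf_def using True by (simp add: N_def)
  finally show ?thesis .
next
  case False
  have "(\<lambda>(j::nat,n::nat). if a+c-int j-int n = k \<and> b+d-int j-int n = m then
      psd_rule_coeff b c j * s (b+d-int j) * psd_rule_coeff (b+d-int j) (a+c-int j) n else 0) = (\<lambda>_. 0)"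
    using False by (auto simp: fun_eq_iff)
  moreover have "Kf k m a b c d = 0" unfolding Kf_def by (subst if_not_P[OF False]) (rule refl)
  ultimately show ?thesis by simp
qed

lemma KR:
  "Sum_any (\<lambda>(p::nat,q::nat,r::nat). if a+c-int p-int q-int r = k \<and> b+d-int p-int q-int r = m then
      s d * psd_rule_coeff d c p * s b * psd_rule_coeff b a q * psd_rule_coeff (d - int p) (a - int q) r else 0) = Kf k m a b c d"
proof (cases "a+c-k = b+d-m \<and> 0 \<le> a+c-k")
  case True
  define N where "N = nat (a+c-k)"
  have N1: "a + c - k = int N" and N2: "b + d - m = int N" using True by (auto simp: N_def)
  have "(\<lambda>(p::nat,q::nat,r::nat). if a+c-int p-int q-int r = k \<and> b+d-int p-int q-int r = m then
      s d * psd_rule_coeff d c p * s b * psd_rule_coeff b a q * psd_rule_coeff (d - int p) (a - int q) r else 0)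
    = (\<lambda>(p,q,r). if p + q + r = N then s d * psd_rule_coeff d c p * s b * psd_rule_coeff b a q * psd_rule_coeff (d - int p) (a - int q) r else 0)"
    using N1 N2 by (auto simp: fun_eq_iff)
  then have "Sum_any (\<lambda>(p::nat,q::nat,r::nat). if a+c-int p-int q-int r = k \<and> b+d-int p-int q-int r = m then
      s d * psd_rule_coeff d c p * s b * psd_rule_coeff b a q * psd_rule_coeff (d - int p) (a - int q) r else 0)
     = (\<Sum>q\<le>N. \<Sum>p\<le>N-q. s d * psd_rule_coeff d c p * s b * psd_rule_coeff b a q * psd_rule_coeff (d - int p) (a - int q) (N-q-p))"
    by (simp add: SA_triple)
  also have "\<dots> = s (b+d) * (\<Sum>q\<le>N. cf (of_int b) (of_int a) q * (\<Sum>p\<le>N-q. cf (of_int d) (of_int c) p * cf (of_int d - of_nat p) (of_int a - of_nat q) (N-q-p)))"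
    by (simp add: sum_distrib_left coeff_cf s_add algebra_simps)
  also have "\<dots> = s (b+d) * (\<Sum>q\<le>N. cf (of_int b) (of_int a) q * cf (of_int d) (of_int a + of_int c - of_nat q) (N-q))"
  proof -
    have "(\<Sum>p\<le>N-q. cf (of_int d) (of_int c) p * cf (of_int d - of_nat p) (of_int a - of_nat q) (N-q-p))
        = cf (of_int d) (of_int a + of_int c - of_nat q) (N-q)" for q
      using collapse[where M="N-q" and d="of_int d" and c="of_int c" and a="of_int a - of_nat q"] by (simp add: algebra_simps)
    then show ?thesis by simp
  qed
  also have "\<dots> = Kf k m a b c d"
    unfolding Kf_def using True by (simp add: N_def)
  finally show ?thesis .
next
  case False
  have "(\<lambda>(p::nat,q::nat,r::nat). if a+c-int p-int q-int r = k \<and> b+d-int p-int q-int r = m then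
      s d * psd_rule_coeff d c p * s b * psd_rule_coeff b a q * psd_rule_coeff (d - int p) (a - int q) r else 0) = (\<lambda>_. 0)"
    using False by (auto simp: fun_eq_iff)
  moreover have "Kf k m a b c d = 0" unfolding Kf_def by (subst if_not_P[OF False]) (rule refl)
  ultimately show ?thesis by simp
qed

lemma cf_P: "cf x y j = P x j * P y j / fact j"
  unfolding cf_def P_g by (simp add: field_simps)

lemma INVk:
  fixes x y :: complex
  shows "(\<Sum>j\<le>t. (-1)^j * cf x y j * cf (x - of_nat j) (y - of_nat j) (t - j)) = (if t = 0 then 1 else 0)"
proof -
  have "(\<Sum>j\<le>t. (-1)^j * cf x y j * cf (x - of_nat j) (y - of_nat j) (t - j))
      = (\<Sum>j\<le>t. ((-1)^j * of_nat (t choose j)) * (P x t * P y t / fact t))"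
  proof (rule sum.cong[OF refl])
    fix j assume "j \<in> {..t}"
    then have jt: "j \<le> t" by simp
    have px: "P x t = P x j * P (x - of_nat j) (t - j)" using P_add[of x j "t-j"] jt by simp
    have py: "P y t = P y j * P (y - of_nat j) (t - j)" using P_add[of y j "t-j"] jt by simp
    have ch: "(of_nat (t choose j) :: complex) = fact t / (fact j * fact (t - j))"
      using binomial_fact[OF jt] by simp
    show "(-1)^j * cf x y j * cf (x - of_nat j) (y - of_nat j) (t - j) = ((-1)^j * of_nat (t choose j)) * (P x t * P y t / fact t)"
      unfolding cf_P px py ch by (simp add: field_simps)
  qed
  also have "\<dots> = (\<Sum>j\<le>t. (-1)^j * of_nat (t choose j)) * (P x t * P y t / fact t)"
    by (simp only: sum_distrib_right)
  also have "\<dots> = (if t = 0 then 1 else 0)"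
    by (cases "t = 0") (simp_all add: choose_alternating_sum P_def)
  finally show ?thesis .
qed


lemma box_L:
  assumes "\<And>k m. A k m \<noteq> 0 \<Longrightarrow> k \<le> U \<and> m \<le> U" "\<And>k m. B k m \<noteq> 0 \<Longrightarrow> k \<le> U \<and> m \<le> U"
    and "A a b \<noteq> 0" "B c d \<noteq> 0" "a + c - int j - int n = k" "b + d - int j - int n = m"
  shows "(a,b,c,d) \<in> {k-U..U} \<times> {m-U..U} \<times> {k-U..U} \<times> {m-U..U} \<and> j \<le> nat (2*U-k) \<and> n \<le> nat (2*U-k)"
proof -
  have "a \<le> U" "b \<le> U" using assms(1)[OF assms(3)] by auto
  moreover have "c \<le> U" "d \<le> U" using assms(2)[OF assms(4)] by auto
  moreover have "int j + int n \<le> 2*U - k" using assms(5) \<open>a \<le> U\<close> \<open>c \<le> U\<close> by linarith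
  ultimately show ?thesis using assms(5,6) by (simp add: le_nat_iff)
qed

lemma anti_L:
  assumes UA: "\<And>k m. A k m \<noteq> 0 \<Longrightarrow> k \<le> U \<and> m \<le> U" and UB: "\<And>k m. B k m \<noteq> 0 \<Longrightarrow> k \<le> U \<and> m \<le> U"
  shows "psd_dagger (psd_mult A B) k m = Sum_any (\<lambda>(a,b,c,d). A a b * B c d * Kf k m a b c d)"
proof -
  have ABc: "psd_mult A B \<in> psd_carrier"
    by (rule carrier_I[where U="2*U"]) (rule mult_bound[OF UA UB])
  define F where "F n = (\<lambda>(a,b,c,d,j). if a+c-int j = k + int n \<and> b+d-int j = m + int n then A a b * B c d * psd_rule_coeff b c j else 0)" for n
  define w where "w n = s (m + int n) * psd_rule_coeff (m + int n) (k + int n) n" for n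
  define h where "h = (\<lambda>(a,b,c,d) (j::nat,n::nat). A a b * B c d * (if a+c-int j-int n = k \<and> b+d-int j-int n = m then
      psd_rule_coeff b c j * s (b+d-int j) * psd_rule_coeff (b+d-int j) (a+c-int j) n else 0))"
  have finF: "finite {t. F n t \<noteq> 0}" for n
  proof -
    have "{t. F n t \<noteq> 0} \<subseteq> Mset A B (k + int n) (m + int n)"
      by (auto simp: F_def Mset_def split: if_splits)
    then show ?thesis using Mset_fin[OF UA UB] finite_subset by blast
  qed
  let ?Bx = "{..nat (2*U-k)} \<times> {k-U..U} \<times> {m-U..U} \<times> {k-U..U} \<times> {m-U..U} \<times> {..nat (2*U-k)}"
  have finJ: "finite {p. F (fst p) (snd p) * w (fst p) \<noteq> 0}"
  proof (rule finite_subset)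
    show "{p. F (fst p) (snd p) * w (fst p) \<noteq> 0} \<subseteq> ?Bx"
    proof
      fix p assume "p \<in> {p. F (fst p) (snd p) * w (fst p) \<noteq> 0}"
      then obtain n a b c d j where p: "p = (n,a,b,c,d,j)" and h: "A a b \<noteq> 0" "B c d \<noteq> 0"
        "a + c - int j - int n = k" "b + d - int j - int n = m"
        by (cases p) (auto simp: F_def split: if_splits)
      show "p \<in> ?Bx" using box_L[where A=A and B=B and U=U, OF UA UB h] unfolding p by simp
    qed
  qed simp
  let ?By = "({k-U..U} \<times> {m-U..U} \<times> {k-U..U} \<times> {m-U..U}) \<times> ({..nat (2*U-k)} \<times> {..nat (2*U-k)})"
  have finH: "finite {p. h (fst p) (snd p) \<noteq> 0}"
  proof (rule finite_subset)
    show "{p. h (fst p) (snd p) \<noteq> 0} \<subseteq> ?By"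
    proof
      fix p assume "p \<in> {p. h (fst p) (snd p) \<noteq> 0}"
      then obtain a b c d j n where p: "p = ((a,b,c,d),(j,n))" and h: "A a b \<noteq> 0" "B c d \<noteq> 0"
        "a + c - int j - int n = k" "b + d - int j - int n = m"
        by (cases p) (auto simp: h_def split: if_splits)
      show "p \<in> ?By" using box_L[where A=A and B=B and U=U, OF UA UB h] unfolding p by simp
    qed
  qed simp
  have "psd_dagger (psd_mult A B) k m = Sum_any (\<lambda>n. psd_mult A B (k + int n) (m + int n) * w n)"
    unfolding dag_SA[OF ABc] w_def by (simp add: mult.assoc)
  also have "\<dots> = Sum_any (\<lambda>n. Sum_any (F n) * w n)"
    by (simp add: mult_SA[OF UA UB] F_def)
  also have "\<dots> = Sum_any (\<lambda>n. Sum_any (\<lambda>t. F n t * w n))"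
    using Sum_any_left_distrib[OF finF] by simp
  also have "\<dots> = Sum_any (\<lambda>(n,t). F n t * w n)"
    by (rule SA_prod[OF finJ])
  also have "\<dots> = Sum_any (\<lambda>(x,y). h x y)"
  proof (rule Sum_any.reindex_cong[where l="\<lambda>((a,b,c,d),(j,n)). (n,(a,b,c,d,j))"])
    show "bij (\<lambda>((a::int,b::int,c::int,d::int),(j::nat,n::nat)). (n,(a,b,c,d,j)))"
      by (rule o_bij[where g="\<lambda>(n,(a,b,c,d,j)). ((a,b,c,d),(j,n))"]) (auto simp: fun_eq_iff)
    have pw: "F n (a,b,c,d,j) * w n = h (a,b,c,d) (j,n)" for a b c d :: int and j n :: nat
    proof (cases "a+c-int j-int n = k \<and> b+d-int j-int n = m")
      case True
      then have e1: "m + int n = b + d - int j" and e2: "k + int n = a + c - int j"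
        and c1: "a+c-int j = k + int n" and c2: "b+d-int j = m + int n" by auto
      have "F n (a,b,c,d,j) = A a b * B c d * psd_rule_coeff b c j" using c1 c2 by (simp add: F_def)
      moreover have "w n = s (b+d-int j) * psd_rule_coeff (b+d-int j) (a+c-int j) n" by (simp add: w_def e1 e2)
      moreover have "h (a,b,c,d) (j,n) = A a b * B c d * (psd_rule_coeff b c j * s (b+d-int j) * psd_rule_coeff (b+d-int j) (a+c-int j) n)"
        using True by (simp add: h_def)
      ultimately show ?thesis by (simp only: mult_ac)
    next
      case False
      then have "\<not> (a+c-int j = k + int n \<and> b+d-int j = m + int n)" by auto
      then have "F n (a,b,c,d,j) = 0" unfolding F_def prod.case by (rule if_not_P)
      moreover have "h (a,b,c,d) (j,n) = 0" by (simp only: h_def prod.case if_not_P[OF False] mult_zero_right)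
      ultimately show ?thesis by simp
    qed
    show "(\<lambda>(n,t). F n t * w n) \<circ> (\<lambda>((a,b,c,d),(j,n)). (n,(a,b,c,d,j))) = (\<lambda>(x,y). h x y)"
    proof (rule ext)
      fix z :: "(int \<times> int \<times> int \<times> int) \<times> nat \<times> nat"
      obtain a b c d j n where z: "z = ((a,b,c,d),(j,n))" by (cases z) auto
      show "((\<lambda>(n,t). F n t * w n) \<circ> (\<lambda>((a,b,c,d),(j,n)). (n,(a,b,c,d,j)))) z = (\<lambda>(x,y). h x y) z"
        unfolding z using pw by simp
    qed
  qed
  also have "\<dots> = Sum_any (\<lambda>x. Sum_any (h x))"
    by (rule SA_prod[OF finH, symmetric])
  also have "\<dots> = Sum_any (\<lambda>(a,b,c,d). A a b * B c d * Kf k m a b c d)"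
  proof (rule Sum_any.cong)
    fix x :: "int \<times> int \<times> int \<times> int"
    obtain a b c d where x: "x = (a,b,c,d)" by (cases x) auto
    let ?g = "\<lambda>(j::nat,n::nat). if a+c-int j-int n = k \<and> b+d-int j-int n = m then
      psd_rule_coeff b c j * s (b+d-int j) * psd_rule_coeff (b+d-int j) (a+c-int j) n else 0"
    have fg: "finite {y. ?g y \<noteq> 0}"
    proof (rule finite_subset)
      show "{y. ?g y \<noteq> 0} \<subseteq> {..nat (a+c-k)} \<times> {..nat (a+c-k)}"
        by (auto split: if_splits)
    qed simp
    have "Sum_any (h x) = Sum_any (\<lambda>y. A a b * B c d * ?g y)"
      unfolding x h_def by (intro Sum_any.cong) auto
    also have "\<dots> = A a b * B c d * Sum_any ?g"
      by (rule Sum_any_right_distrib[OF fg, symmetric])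
    also have "\<dots> = A a b * B c d * Kf k m a b c d" by (simp only: KL)
    finally show "Sum_any (h x) = (\<lambda>(a,b,c,d). A a b * B c d * Kf k m a b c d) x" unfolding x by simp
  qed
  finally show ?thesis .
qed


lemma box_R:
  assumes UA: "\<And>k m. A k m \<noteq> 0 \<Longrightarrow> k \<le> U \<and> m \<le> U" and UB: "\<And>k m. B k m \<noteq> 0 \<Longrightarrow> k \<le> U \<and> m \<le> U"
    and h: "B (c' + int p) (d' + int p) \<noteq> 0" "A (a' + int q) (b' + int q) \<noteq> 0"
      "c' + a' - int r = k" "d' + b' - int r = m"
  shows "((c',d',a',b',r),(p,q)) \<in> ({k-U..U} \<times> {m-U..U} \<times> {k-U..U} \<times> {m-U..U} \<times> {..nat (2*U-k)}) \<times> ({..nat (2*U-k)} \<times> {..nat (2*U-k)})"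
proof -
  have "c' + int p \<le> U" "d' + int p \<le> U" using UB[OF h(1)] by auto
  moreover have "a' + int q \<le> U" "b' + int q \<le> U" using UA[OF h(2)] by auto
  moreover have "int r \<le> 2*U - k" "int p \<le> 2*U - k" "int q \<le> 2*U - k"
    using calculation h(3,4) by linarith+
  ultimately show ?thesis using h(3,4) by (simp add: le_nat_iff)
qed

lemma box_L3:
  assumes "\<And>k m. A k m \<noteq> 0 \<Longrightarrow> k \<le> U \<and> m \<le> U" "\<And>k m. B k m \<noteq> 0 \<Longrightarrow> k \<le> U \<and> m \<le> U"
    and "A a b \<noteq> 0" "B c d \<noteq> 0" "a + c - int p - int q - int r = k" "b + d - int p - int q - int r = m"
  shows "((a,b,c,d),(p,q,r)) \<in> ({k-U..U} \<times> {m-U..U} \<times> {k-U..U} \<times> {m-U..U}) \<times> ({..nat (2*U-k)} \<times> {..nat (2*U-k)} \<times> {..nat (2*U-k)})"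
proof -
  have "a \<le> U" "b \<le> U" using assms(1)[OF assms(3)] by auto
  moreover have "c \<le> U" "d \<le> U" using assms(2)[OF assms(4)] by auto
  moreover have "int p + int q + int r \<le> 2*U - k" using assms(5) \<open>a \<le> U\<close> \<open>c \<le> U\<close> by linarith
  ultimately show ?thesis using assms(5,6) by (simp add: le_nat_iff)
qed

lemma anti_R:
  assumes cA: "A \<in> psd_carrier" and cB: "B \<in> psd_carrier"
    and UA: "\<And>k m. A k m \<noteq> 0 \<Longrightarrow> k \<le> U \<and> m \<le> U" and UB: "\<And>k m. B k m \<noteq> 0 \<Longrightarrow> k \<le> U \<and> m \<le> U"
  shows "psd_mult (psd_dagger B) (psd_dagger A) k m = Sum_any (\<lambda>(a,b,c,d). A a b * B c d * Kf k m a b c d)"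
proof -
  have UA': "\<And>k m. psd_dagger A k m \<noteq> 0 \<Longrightarrow> k \<le> U \<and> m \<le> U" using dag_bound[OF cA UA] by blast
  have UB': "\<And>k m. psd_dagger B k m \<noteq> 0 \<Longrightarrow> k \<le> U \<and> m \<le> U" using dag_bound[OF cB UB] by blast
  define \<beta> where "\<beta> c' d' p = B (c' + int p) (d' + int p) * s (d' + int p) * psd_rule_coeff (d' + int p) (c' + int p) p" for c' d' p
  define \<alpha> where "\<alpha> a' b' q = A (a' + int q) (b' + int q) * s (b' + int q) * psd_rule_coeff (b' + int q) (a' + int q) q" for a' b' q
  define G where "G = (\<lambda>(c',d',a',b',r) (p,q). if c'+a'-int r = k \<and> d'+b'-int r = m then \<beta> c' d' p * \<alpha> a' b' q * psd_rule_coeff d' a' r else 0)"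
  define h where "h = (\<lambda>(a,b,c,d) (p::nat,q::nat,r::nat). A a b * B c d * (if a+c-int p-int q-int r = k \<and> b+d-int p-int q-int r = m then
      s d * psd_rule_coeff d c p * s b * psd_rule_coeff b a q * psd_rule_coeff (d - int p) (a - int q) r else 0))"
  have dB: "psd_dagger B c' d' = Sum_any (\<beta> c' d')" for c' d' unfolding dag_SA[OF cB] \<beta>_def ..
  have dA: "psd_dagger A a' b' = Sum_any (\<alpha> a' b')" for a' b' unfolding dag_SA[OF cA] \<alpha>_def ..
  have step1: "(\<lambda>(c',d',a',b',r). if c'+a'-int r = k \<and> d'+b'-int r = m then psd_dagger B c' d' * psd_dagger A a' b' * psd_rule_coeff d' a' r else 0)
      = (\<lambda>x. Sum_any (G x))"
  proof (rule ext)
    fix x :: "int \<times> int \<times> int \<times> int \<times> nat"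
    obtain c' d' a' b' r where x: "x = (c',d',a',b',r)" by (cases x) auto
    show "(\<lambda>(c',d',a',b',r). if c'+a'-int r = k \<and> d'+b'-int r = m then psd_dagger B c' d' * psd_dagger A a' b' * psd_rule_coeff d' a' r else 0) x
        = Sum_any (G x)"
    proof (cases "c'+a'-int r = k \<and> d'+b'-int r = m")
      case True
      define S1 where "S1 = {p. \<beta> c' d' p \<noteq> 0}"
      define S2 where "S2 = {q. \<alpha> a' b' q \<noteq> 0}"
      have f1: "finite S1"
        by (rule finite_subset[OF _ fin1[OF cB, of c' d']]) (auto simp: S1_def \<beta>_def)
      have f2: "finite S2"
        by (rule finite_subset[OF _ fin1[OF cA, of a' b']]) (auto simp: S2_def \<alpha>_def)
      have "Sum_any (\<beta> c' d') = sum (\<beta> c' d') S1" unfolding S1_def by (rule Sum_any.expand_set)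
      moreover have "Sum_any (\<alpha> a' b') = sum (\<alpha> a' b') S2" unfolding S2_def by (rule Sum_any.expand_set)
      moreover have "Sum_any (G x) = sum (G x) (S1 \<times> S2)"
        by (rule SA_sup) (use f1 f2 in \<open>auto simp: G_def x S1_def S2_def split: if_splits\<close>)
      moreover have "sum (\<beta> c' d') S1 * sum (\<alpha> a' b') S2 * psd_rule_coeff d' a' r = sum (G x) (S1 \<times> S2)"
      proof -
        have "sum (\<beta> c' d') S1 * sum (\<alpha> a' b') S2 * psd_rule_coeff d' a' r
            = (\<Sum>p\<in>S1. \<Sum>q\<in>S2. \<beta> c' d' p * \<alpha> a' b' q * psd_rule_coeff d' a' r)"
          by (simp add: sum_distrib_left sum_distrib_right mult_ac)
        also have "\<dots> = (\<Sum>(p,q)\<in>S1 \<times> S2. \<beta> c' d' p * \<alpha> a' b' q * psd_rule_coeff d' a' r)"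
          by (rule sum.cartesian_product)
        also have "\<dots> = sum (G x) (S1 \<times> S2)"
          by (intro sum.cong refl) (use True in \<open>auto simp: G_def x\<close>)
        finally show ?thesis .
      qed
      ultimately show ?thesis unfolding x dB dA using True by simp
    next
      case False
      have "G x = (\<lambda>_. 0)" unfolding G_def x using False by (auto simp: fun_eq_iff)
      then show ?thesis unfolding x prod.case if_not_P[OF False] by simp
    qed
  qed
  let ?Bx = "({k-U..U} \<times> {m-U..U} \<times> {k-U..U} \<times> {m-U..U} \<times> {..nat (2*U-k)}) \<times> ({..nat (2*U-k)} \<times> {..nat (2*U-k)})"
  have finG: "finite {z. G (fst z) (snd z) \<noteq> 0}"
  proof (rule finite_subset)
    show "{z. G (fst z) (snd z) \<noteq> 0} \<subseteq> ?Bx"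
    proof
      fix z assume "z \<in> {z. G (fst z) (snd z) \<noteq> 0}"
      then obtain c' d' a' b' r p q where z: "z = ((c',d',a',b',r),(p,q))" and hh: "B (c' + int p) (d' + int p) \<noteq> 0" "A (a' + int q) (b' + int q) \<noteq> 0"
        "c' + a' - int r = k" "d' + b' - int r = m"
        by (cases z) (auto simp: G_def \<alpha>_def \<beta>_def split: if_splits)
      show "z \<in> ?Bx" unfolding z by (rule box_R[where A=A and B=B and U=U, OF UA UB hh])
    qed
  qed simp
  let ?By = "({k-U..U} \<times> {m-U..U} \<times> {k-U..U} \<times> {m-U..U}) \<times> ({..nat (2*U-k)} \<times> {..nat (2*U-k)} \<times> {..nat (2*U-k)})"
  have finH: "finite {z. h (fst z) (snd z) \<noteq> 0}"
  proof (rule finite_subset)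
    show "{z. h (fst z) (snd z) \<noteq> 0} \<subseteq> ?By"
    proof
      fix z assume "z \<in> {z. h (fst z) (snd z) \<noteq> 0}"
      then obtain a b c d p q r where z: "z = ((a,b,c,d),(p,q,r))" and hh: "A a b \<noteq> 0" "B c d \<noteq> 0"
        "a + c - int p - int q - int r = k" "b + d - int p - int q - int r = m"
        by (cases z) (auto simp: h_def split: if_splits)
      show "z \<in> ?By" unfolding z by (rule box_L3[where A=A and B=B and U=U, OF UA UB hh])
    qed
  qed simp
  have "psd_mult (psd_dagger B) (psd_dagger A) k m = Sum_any (\<lambda>x. Sum_any (G x))"
    by (simp add: mult_SA[OF UB' UA'] step1)
  also have "\<dots> = Sum_any (\<lambda>(x,y). G x y)"
    by (rule SA_prod[OF finG])
  also have "\<dots> = Sum_any (\<lambda>(x,y). h x y)"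
  proof (rule Sum_any.reindex_cong[where l="\<lambda>((a,b,c,d),(p,q,r)). ((c - int p, d - int p, a - int q, b - int q, r),(p,q))"])
    show "bij (\<lambda>((a::int,b::int,c::int,d::int),(p::nat,q::nat,r::nat)). ((c - int p, d - int p, a - int q, b - int q, r),(p,q)))"
      by (rule o_bij[where g="\<lambda>((c',d',a',b',r),(p,q)). ((a' + int q, b' + int q, c' + int p, d' + int p),(p,q,r))"]) (auto simp: fun_eq_iff)
    have pw: "G (c - int p, d - int p, a - int q, b - int q, r) (p,q) = h (a,b,c,d) (p,q,r)" for a b c d :: int and p q r :: nat
    proof (cases "a+c-int p-int q-int r = k \<and> b+d-int p-int q-int r = m")
      case True
      then have c1: "c - int p + (a - int q) - int r = k \<and> d - int p + (b - int q) - int r = m" by auto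
      have "G (c - int p, d - int p, a - int q, b - int q, r) (p,q) = \<beta> (c - int p) (d - int p) p * \<alpha> (a - int q) (b - int q) q * psd_rule_coeff (d - int p) (a - int q) r"
        using c1 by (simp add: G_def)
      also have "\<beta> (c - int p) (d - int p) p = B c d * s d * psd_rule_coeff d c p" by (simp add: \<beta>_def)
      also have "\<alpha> (a - int q) (b - int q) q = A a b * s b * psd_rule_coeff b a q" by (simp add: \<alpha>_def)
      also have "h (a,b,c,d) (p,q,r) = A a b * B c d * (s d * psd_rule_coeff d c p * s b * psd_rule_coeff b a q * psd_rule_coeff (d - int p) (a - int q) r)"
        using True by (simp add: h_def)
      ultimately show ?thesis by (simp only: mult_ac)
    next
      case False
      then have c1: "\<not> (c - int p + (a - int q) - int r = k \<and> d - int p + (b - int q) - int r = m)" by auto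
      have "G (c - int p, d - int p, a - int q, b - int q, r) (p,q) = 0"
        by (simp only: G_def prod.case if_not_P[OF c1])
      moreover have "h (a,b,c,d) (p,q,r) = 0" by (simp only: h_def prod.case if_not_P[OF False] mult_zero_right)
      ultimately show ?thesis by simp
    qed
    show "(\<lambda>(x,y). G x y) \<circ> (\<lambda>((a,b,c,d),(p,q,r)). ((c - int p, d - int p, a - int q, b - int q, r),(p,q))) = (\<lambda>(x,y). h x y)"
    proof (rule ext)
      fix z :: "(int \<times> int \<times> int \<times> int) \<times> nat \<times> nat \<times> nat"
      obtain a b c d p q r where z: "z = ((a,b,c,d),(p,q,r))" by (cases z) auto
      show "((\<lambda>(x,y). G x y) \<circ> (\<lambda>((a,b,c,d),(p,q,r)). ((c - int p, d - int p, a - int q, b - int q, r),(p,q)))) z = (\<lambda>(x,y). h x y) z"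
        unfolding z using pw by simp
    qed
  qed
  also have "\<dots> = Sum_any (\<lambda>x. Sum_any (h x))"
    by (rule SA_prod[OF finH, symmetric])
  also have "\<dots> = Sum_any (\<lambda>(a,b,c,d). A a b * B c d * Kf k m a b c d)"
  proof (rule Sum_any.cong)
    fix x :: "int \<times> int \<times> int \<times> int"
    obtain a b c d where x: "x = (a,b,c,d)" by (cases x) auto
    let ?g = "\<lambda>(p::nat,q::nat,r::nat). if a+c-int p-int q-int r = k \<and> b+d-int p-int q-int r = m then
      s d * psd_rule_coeff d c p * s b * psd_rule_coeff b a q * psd_rule_coeff (d - int p) (a - int q) r else 0"
    have fg: "finite {y. ?g y \<noteq> 0}"
    proof (rule finite_subset)
      show "{y. ?g y \<noteq> 0} \<subseteq> {..nat (a+c-k)} \<times> {..nat (a+c-k)} \<times> {..nat (a+c-k)}"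
        by (auto split: if_splits)
    qed simp
    have "Sum_any (h x) = Sum_any (\<lambda>y. A a b * B c d * ?g y)"
      unfolding x h_def by (intro Sum_any.cong) auto
    also have "\<dots> = A a b * B c d * Sum_any ?g"
      by (rule Sum_any_right_distrib[OF fg, symmetric])
    also have "\<dots> = A a b * B c d * Kf k m a b c d" by (simp only: KR)
    finally show "Sum_any (h x) = (\<lambda>(a,b,c,d). A a b * B c d * Kf k m a b c d) x" unfolding x by simp
  qed
  finally show ?thesis .
qed


lemma invol:
  assumes cA: "A \<in> psd_carrier"
  shows "psd_dagger (psd_dagger A) k m = A k m"
proof -
  obtain U where UA: "\<And>k m. A k m \<noteq> 0 \<Longrightarrow> k \<le> U \<and> m \<le> U" using carrier_U cA by blast
  have cD: "psd_dagger A \<in> psd_carrier" by (rule dag_carrier[OF cA])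
  define Nm where "Nm = nat (U - k)"
  define f where "f n j = A (k + int n + int j) (m + int n + int j) * s (m + int n + int j) * psd_rule_coeff (m + int n + int j) (k + int n + int j) j
       * (s (m + int n) * psd_rule_coeff (m + int n) (k + int n) n)" for n j :: nat
  have fz: "f n j = 0" if "\<not> n + j \<le> Nm" for n j
  proof -
    have "A (k + int n + int j) (m + int n + int j) = 0"
    proof (rule ccontr)
      assume "A (k + int n + int j) (m + int n + int j) \<noteq> 0"
      then have "k + int n + int j \<le> U" using UA by blast
      then show False using that by (simp add: Nm_def)
    qed
    then show ?thesis by (simp add: f_def)
  qed
  have inner: "psd_dagger A (k + int n) (m + int n) = (\<Sum>j\<le>Nm. A (k + int n + int j) (m + int n + int j) * s (m + int n + int j) * psd_rule_coeff (m + int n + int j) (k + int n + int j) j)" for n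
  proof -
    have "psd_dagger A (k + int n) (m + int n) = Sum_any (\<lambda>j. A (k + int n + int j) (m + int n + int j) * s (m + int n + int j) * psd_rule_coeff (m + int n + int j) (k + int n + int j) j)"
      by (rule dag_SA[OF cA])
    also have "\<dots> = (\<Sum>j\<le>Nm. A (k + int n + int j) (m + int n + int j) * s (m + int n + int j) * psd_rule_coeff (m + int n + int j) (k + int n + int j) j)"
    proof (rule SA_sup)
      fix j assume "j \<notin> {..Nm}"
      have "A (k + int n + int j) (m + int n + int j) = 0"
      proof (rule ccontr)
        assume "A (k + int n + int j) (m + int n + int j) \<noteq> 0"
        then have "k + int n + int j \<le> U" using UA by blast
        then show False using \<open>j \<notin> {..Nm}\<close> by (simp add: Nm_def)
      qed
      then show "A (k + int n + int j) (m + int n + int j) * s (m + int n + int j) * psd_rule_coeff (m + int n + int j) (k + int n + int j) j = 0" by simp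
    qed simp
    finally show ?thesis .
  qed
  have "psd_dagger (psd_dagger A) k m = Sum_any (\<lambda>n. psd_dagger A (k + int n) (m + int n) * (s (m + int n) * psd_rule_coeff (m + int n) (k + int n) n))"
    unfolding dag_SA[OF cD] by (simp add: mult.assoc)
  also have "\<dots> = (\<Sum>n\<le>Nm. psd_dagger A (k + int n) (m + int n) * (s (m + int n) * psd_rule_coeff (m + int n) (k + int n) n))"
  proof (rule SA_sup)
    fix n assume "n \<notin> {..Nm}"
    have "psd_dagger A (k + int n) (m + int n) = 0"
    proof (rule ccontr)
      assume "psd_dagger A (k + int n) (m + int n) \<noteq> 0"
      then have "k + int n \<le> U" using dag_bound[OF cA UA] by blast
      then show False using \<open>n \<notin> {..Nm}\<close> by (simp add: Nm_def)
    qed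
    then show "psd_dagger A (k + int n) (m + int n) * (s (m + int n) * psd_rule_coeff (m + int n) (k + int n) n) = 0" by simp
  qed simp
  also have "\<dots> = (\<Sum>n\<le>Nm. \<Sum>j\<le>Nm. f n j)"
    unfolding inner f_def by (simp add: sum_distrib_right)
  also have "\<dots> = (\<Sum>j\<le>Nm. \<Sum>n\<le>Nm. f n j)"
    by (rule sum.swap)
  also have "\<dots> = (\<Sum>(j,n)\<in>{..Nm} \<times> {..Nm}. f n j)"
    by (rule sum.cartesian_product)
  also have "\<dots> = (\<Sum>(j,n)\<in>{(j,n). j + n \<le> Nm}. f n j)"
    by (rule sum.mono_neutral_right) (auto intro: fz)
  also have "\<dots> = (\<Sum>t\<le>Nm. \<Sum>j\<le>t. f (t - j) j)"
    by (rule sum.triangle_reindex_eq)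
  also have "\<dots> = (\<Sum>t\<le>Nm. if t = 0 then A (k + int t) (m + int t) else 0)"
  proof (rule sum.cong[OF refl])
    fix t assume "t \<in> {..Nm}"
    define M where "M = m + int t"
    define K where "K = k + int t"
    have "(\<Sum>j\<le>t. f (t - j) j) = (\<Sum>j\<le>t. A K M * (s M * s M) * ((-1)^j * cf (of_int M) (of_int K) j * cf (of_int M - of_nat j) (of_int K - of_nat j) (t - j)))"
    proof (rule sum.cong[OF refl])
      fix j assume "j \<in> {..t}"
      then have jt: "j \<le> t" by simp
      then have e: "int (t - j) = int t - int j" by simp
      have e1: "k + int (t - j) + int j = K" "m + int (t - j) + int j = M" "m + int (t - j) = M - int j" "k + int (t - j) = K - int j"
        unfolding K_def M_def using e by simp_all
      show "f (t - j) j = A K M * (s M * s M) * ((-1)^j * cf (of_int M) (of_int K) j * cf (of_int M - of_nat j) (of_int K - of_nat j) (t - j))"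
        unfolding f_def e1 by (simp add: s_diff coeff_cf mult_ac)
    qed
    also have "\<dots> = A K M * (\<Sum>j\<le>t. (-1)^j * cf (of_int M) (of_int K) j * cf (of_int M - of_nat j) (of_int K - of_nat j) (t - j))"
      by (simp add: s_sq sum_distrib_left)
    also have "\<dots> = (if t = 0 then A (k + int t) (m + int t) else 0)"
      by (simp add: INVk K_def M_def)
    finally show "(\<Sum>j\<le>t. f (t - j) j) = (if t = 0 then A (k + int t) (m + int t) else 0)" .
  qed
  also have "\<dots> = A k m"
    by (simp add: sum.delta')
  finally show ?thesis .
qed


lemma fin_term:
  assumes "A \<in> psd_carrier"
  shows "finite {j. A (k + int j) (m + int j) * s (m + int j) * psd_rule_coeff (m + int j) (k + int j) j \<noteq> 0}"
  by (rule finite_subset[OF _ fin1[OF assms, of k m]]) auto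

lemma add_carrier:
  assumes "A \<in> psd_carrier" "B \<in> psd_carrier"
  shows "psd_add A B \<in> psd_carrier"
proof -
  obtain U1 where U1: "\<And>k m. A k m \<noteq> 0 \<Longrightarrow> k \<le> U1 \<and> m \<le> U1" using carrier_U assms(1) by blast
  obtain U2 where U2: "\<And>k m. B k m \<noteq> 0 \<Longrightarrow> k \<le> U2 \<and> m \<le> U2" using carrier_U assms(2) by blast
  show ?thesis
  proof (rule carrier_I[where U="max U1 U2"])
    fix k m assume "psd_add A B k m \<noteq> 0"
    then have "A k m \<noteq> 0 \<or> B k m \<noteq> 0" by (auto simp: psd_add_def)
    then show "k \<le> max U1 U2 \<and> m \<le> max U1 U2" using U1 U2 by (meson le_max_iff_disj)
  qed
qed

lemma smult_carrier:
  assumes "A \<in> psd_carrier"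
  shows "psd_smult c A \<in> psd_carrier"
proof -
  obtain U where U: "\<And>k m. A k m \<noteq> 0 \<Longrightarrow> k \<le> U \<and> m \<le> U" using carrier_U assms by blast
  show ?thesis
    by (rule carrier_I[where U=U]) (use U in \<open>auto simp: psd_smult_def\<close>)
qed

lemma dag_add:
  assumes "A \<in> psd_carrier" "B \<in> psd_carrier"
  shows "psd_dagger (psd_add A B) = psd_add (psd_dagger A) (psd_dagger B)"
proof (rule ext, rule ext)
  fix k m
  have "psd_dagger (psd_add A B) k m = Sum_any (\<lambda>j. A (k + int j) (m + int j) * s (m + int j) * psd_rule_coeff (m + int j) (k + int j) j
        + B (k + int j) (m + int j) * s (m + int j) * psd_rule_coeff (m + int j) (k + int j) j)"
    unfolding dag_SA[OF add_carrier[OF assms]] by (simp add: psd_add_def algebra_simps)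
  also have "\<dots> = psd_dagger A k m + psd_dagger B k m"
    unfolding dag_SA[OF assms(1)] dag_SA[OF assms(2)]
    by (rule Sum_any.distrib[OF fin_term[OF assms(1)] fin_term[OF assms(2)]])
  finally show "psd_dagger (psd_add A B) k m = psd_add (psd_dagger A) (psd_dagger B) k m"
    by (simp add: psd_add_def)
qed

lemma dag_smult:
  assumes "A \<in> psd_carrier"
  shows "psd_dagger (psd_smult c A) = psd_smult c (psd_dagger A)"
proof (rule ext, rule ext)
  fix k m
  have "psd_dagger (psd_smult c A) k m = Sum_any (\<lambda>j. c * (A (k + int j) (m + int j) * s (m + int j) * psd_rule_coeff (m + int j) (k + int j) j))"
    unfolding dag_SA[OF smult_carrier[OF assms]] by (simp add: psd_smult_def algebra_simps)
  also have "\<dots> = c * psd_dagger A k m"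
    unfolding dag_SA[OF assms]
    by (rule Sum_any_right_distrib[OF fin_term[OF assms], symmetric])
  finally show "psd_dagger (psd_smult c A) k m = psd_smult c (psd_dagger A) k m"
    by (simp add: psd_smult_def)
qed

lemma one_carrier: "psd_one \<in> psd_carrier"
  by (rule carrier_I[where U=0]) (auto simp: psd_one_def split: if_splits)

lemma dag_one: "psd_dagger psd_one = psd_one"
proof (rule ext, rule ext)
  fix k m
  have eq: "(\<lambda>j. psd_one (k + int j) (m + int j) * s (m + int j) * psd_rule_coeff (m + int j) (k + int j) j)
      = (\<lambda>j. if j = 0 then psd_one k m else 0)"
  proof (rule ext)
    fix j :: nat
    show "psd_one (k + int j) (m + int j) * s (m + int j) * psd_rule_coeff (m + int j) (k + int j) j
      = (if j = 0 then psd_one k m else 0)"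
    proof (cases "j = 0")
      case True
      then show ?thesis
        by (auto simp: psd_one_def psd_rule_coeff_def ffal_def s_def)
    next
      case False
      have "ffal 0 j = 0" unfolding ffal_def using False
        by (subst prod_zero_iff) (auto intro!: bexI[of _ 0])
      then show ?thesis using False
        by (auto simp: psd_one_def psd_rule_coeff_def)
    qed
  qed
  then show "psd_dagger psd_one k m = psd_one k m"
    unfolding dag_SA[OF one_carrier] eq by simp
qed

theorem lemma2p3:
  shows "(\<forall>A \<in> psd_carrier. \<forall>k m. finite {j::nat. A (k + int j) (m + int j) \<noteq> 0})
    \<and> (\<forall>A \<in> psd_carrier. psd_dagger A \<in> psd_carrier)
    \<and> (\<forall>A \<in> psd_carrier. psd_dagger (psd_dagger A) = A)
    \<and> (\<forall>A \<in> psd_carrier. \<forall>B \<in> psd_carrier.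
          psd_dagger (psd_mult A B) = psd_mult (psd_dagger B) (psd_dagger A))
    \<and> (\<forall>A \<in> psd_carrier. \<forall>B \<in> psd_carrier.
          psd_dagger (psd_add A B) = psd_add (psd_dagger A) (psd_dagger B))
    \<and> (\<forall>c. \<forall>A \<in> psd_carrier. psd_dagger (psd_smult c A) = psd_smult c (psd_dagger A))
    \<and> psd_dagger psd_one = psd_one
    \<and> bij_betw psd_dagger psd_carrier psd_carrier"
proof (intro conjI ballI allI)
  fix A k m assume "A \<in> psd_carrier"
  then show "finite {j::nat. A (k + int j) (m + int j) \<noteq> 0}" by (rule fin1)
next
  fix A assume "A \<in> psd_carrier"
  then show "psd_dagger A \<in> psd_carrier" by (rule dag_carrier)
next
  fix A assume "A \<in> psd_carrier"
  then show "psd_dagger (psd_dagger A) = A" by (intro ext invol)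
next
  fix A B assume cA: "A \<in> psd_carrier" and cB: "B \<in> psd_carrier"
  obtain U1 where U1: "\<And>k m. A k m \<noteq> 0 \<Longrightarrow> k \<le> U1 \<and> m \<le> U1" using carrier_U cA by blast
  obtain U2 where U2: "\<And>k m. B k m \<noteq> 0 \<Longrightarrow> k \<le> U2 \<and> m \<le> U2" using carrier_U cB by blast
  have UA: "\<And>k m. A k m \<noteq> 0 \<Longrightarrow> k \<le> max U1 U2 \<and> m \<le> max U1 U2" using U1 by (meson le_max_iff_disj)
  have UB: "\<And>k m. B k m \<noteq> 0 \<Longrightarrow> k \<le> max U1 U2 \<and> m \<le> max U1 U2" using U2 by (meson le_max_iff_disj)
  show "psd_dagger (psd_mult A B) = psd_mult (psd_dagger B) (psd_dagger A)"
  proof (rule ext, rule ext)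
    fix k m
    show "psd_dagger (psd_mult A B) k m = psd_mult (psd_dagger B) (psd_dagger A) k m"
      using anti_L[OF UA UB, where k=k and m=m] anti_R[OF cA cB UA UB, where k=k and m=m] by simp
  qed
next
  fix A B assume "A \<in> psd_carrier" "B \<in> psd_carrier"
  then show "psd_dagger (psd_add A B) = psd_add (psd_dagger A) (psd_dagger B)" by (rule dag_add)
next
  fix c A assume "A \<in> psd_carrier"
  then show "psd_dagger (psd_smult c A) = psd_smult c (psd_dagger A)" by (rule dag_smult)
next
  show "psd_dagger psd_one = psd_one" by (rule dag_one)
next
  show "bij_betw psd_dagger psd_carrier psd_carrier"
    by (rule bij_betw_byWitness[where f'=psd_dagger]) (auto intro: ext invol dag_carrier)
qed


end
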